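(* Let $d \in \mathbb{N}$, $L \in \mathbb{N}$ with $L\geq 3$, $B \in \mathbb{N}$ with $B\geq 3$, $c > 0$, $q \in [1,2]$, and $s \in \mathbb{N}$ with $s \leq \min \{ d, \frac{B}{3} \}$. Then \[ \nu \cdot \frac{c^L s^{1 - \frac{2}{q}} / (2 \cdot 3^{2/q})}{M s}\, \vartheta_{M,y}^{(s)} \in \mathcal{H}_{(d,B,\dots,B,1),c}^q \quad \text{for all } M \in \mathbb{N},\ \nu \in \{ \pm 1 \},\ y \in [0,1]^d, \] where $B$ appears $L-1$ times in $(d,B,\dots,B,1)$.
   Context: Let $\varrho(x)=\max\{0,x\}$ (componentwise on vectors). For $M>0$, $\sigma\in\mathbb{R}$: $\Lambda_{M,\sigma}(t)=0$ if $t\le\sigma-\frac1M$, and $\Lambda_{M,\sigma}(t)=1-M|t-\sigma|$ if $t\ge\sigma-\frac1M$. For $y\in\mathbb{R}^d$, $s\in\{1,\dots,d\}$: $\vartheta^{(s)}_{M,y}(x)=\varrho\big(\sum_{i=1}^s\Lambda_{M,y_i}(x_i)-(s-1)\big)$, $x\in\mathbb{R}^d$. Neural networks: for $(N_0,\dots,N_L)$ and $\Phi=((W^i,b^i))_{i=1}^L$, $W^i\in\mathbb{R}^{N_i\times N_{i-1}}$, $b^i\in\mathbb{R}^{N_i}$, the realization is $R(\Phi)(x)=x^L$ with $x^0=x$, $x^i=\varrho(W^ix^{i-1}+b^i)$ for $1\le i\le L-1$, $x^L=W^Lx^{L-1}+b^L$. With entrywise $\ell^q$ norms and $\|\Phi\|_{\ell^q}=\max_i\max\{\|W^i\|_{\ell^q},\|b^i\|_{\ell^q}\}$,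 set $\mathcal{H}^q_{(N_0,\dots,N_L),c}=\{R(\Phi):\|\Phi\|_{\ell^q}\le c\}$. *)

theory Defs
  imports Complex_Main
begin

text \<open>Vectors in R^n are represented as functions nat => real, using indices 0..n-1
  (index i here corresponds to coordinate i+1 of the paper).
  A matrix in R^{m x n} is a function nat => nat => real, entries (i,j) with i<m, j<n.\<close>

definition relu :: "real \<Rightarrow> real" where
  "relu x = max 0 x"

definition Lambda :: "real \<Rightarrow> real \<Rightarrow> real \<Rightarrow> real" where
  "Lambda M \<sigma> t = (if t \<le> \<sigma> - 1 / M then 0 else 1 - M * \<bar>t - \<sigma>\<bar>)"

definition theta :: "nat \<Rightarrow> real \<Rightarrow> (nat \<Rightarrow> real) \<Rightarrow> (nat \<Rightarrow> real) \<Rightarrow> real" where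
  "theta s M y x = relu ((\<Sum>i<s. Lambda M (y i) (x i)) - (real s - 1))"

type_synonym layer = "(nat \<Rightarrow> nat \<Rightarrow> real) \<times> (nat \<Rightarrow> real)"

definition affine :: "layer \<Rightarrow> nat \<Rightarrow> nat \<Rightarrow> (nat \<Rightarrow> real) \<Rightarrow> (nat \<Rightarrow> real)" where
  "affine Wb m n x = (\<lambda>i. if i < n then (\<Sum>j<m. fst Wb i j * x j) + snd Wb i else 0)"

fun realize :: "nat list \<Rightarrow> layer list \<Rightarrow> (nat \<Rightarrow> real) \<Rightarrow> (nat \<Rightarrow> real)" where
  "realize (n0 # n1 # ns) [l] x = affine l n0 n1 x"
| "realize (n0 # n1 # ns) (l # l' # ls) x =
     realize (n1 # ns) (l' # ls) (\<lambda>i. relu (affine l n0 n1 x i))"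
| "realize _ _ x = x"

definition mat_lq :: "real \<Rightarrow> nat \<Rightarrow> nat \<Rightarrow> (nat \<Rightarrow> nat \<Rightarrow> real) \<Rightarrow> real" where
  "mat_lq q m n W = (\<Sum>i<m. \<Sum>j<n. \<bar>W i j\<bar> powr q) powr (1 / q)"

definition vec_lq :: "real \<Rightarrow> nat \<Rightarrow> (nat \<Rightarrow> real) \<Rightarrow> real" where
  "vec_lq q m b = (\<Sum>i<m. \<bar>b i\<bar> powr q) powr (1 / q)"

definition net_lq :: "real \<Rightarrow> nat list \<Rightarrow> layer list \<Rightarrow> real" where
  "net_lq q arch \<Phi> =
     Max ((\<lambda>i. max (mat_lq q (arch ! (i+1)) (arch ! i) (fst (\<Phi> ! i)))
                    (vec_lq q (arch ! (i+1)) (snd (\<Phi> ! i)))) ` {..<length \<Phi>})"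

definition H_class :: "real \<Rightarrow> nat list \<Rightarrow> real \<Rightarrow> ((nat \<Rightarrow> real) \<Rightarrow> (nat \<Rightarrow> real)) set" where
  "H_class q arch c = {realize arch \<Phi> | \<Phi>.
      length \<Phi> \<ge> 1 \<and> length arch = length \<Phi> + 1 \<and> net_lq q arch \<Phi> \<le> c}"

end

theory Submission imports Defs begin

lemma sum_3parts:
  assumes "2*s < (B::nat)"
  shows "(\<Sum>j<B. if j<s then A j else if j<2*s then C (j-s) else if j=2*s then D else 0)
     = (\<Sum>i<s. A i) + (\<Sum>i<s. C i) + (D::real)"
proof -
  have "(\<Sum>j<B. if j<s then A j else if j<2*s then C (j-s) else if j=2*s then D else 0)
     = (\<Sum>j<B. (if j\<in>{..<s} then A j else 0) + (if j \<in> {s..<2*s} then C (j-s) else 0)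
        + (if j \<in> {2*s} then D else 0))"
    by (rule sum.cong) auto
  also have "\<dots> = sum A ({..<B} \<inter> {..<s}) + sum (\<lambda>j. C (j-s)) ({..<B} \<inter> {s..<2*s})
     + sum (\<lambda>_. D) ({..<B} \<inter> {2*s})"
    by (simp add: sum.distrib sum.inter_restrict)
  also have "{..<B} \<inter> {..<s} = {..<s}" using assms by auto
  also have "{..<B} \<inter> {s..<2*s} = {0+s..<s+s}" using assms by auto
  also have "{..<B} \<inter> {2*s} = {2*s}" using assms by auto
  also have "sum (\<lambda>j. C (j-s)) {0+s..<s+s} = (\<Sum>i=0..<s. C i)"
    by (subst sum.shift_bounds_nat_ivl) simp
  finally show ?thesis by (simp add: atLeast0LessThan)
qed

lemma Lambda_relu: "M > 0 \<Longrightarrow> Lambda M \<sigma> t = M * relu (t - \<sigma> + 1/M) - 2*M*relu (t - \<sigma>)"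
proof -
  assume M: "M > 0"
  consider "t \<le> \<sigma> - 1/M" | "\<sigma> - 1/M < t" "t \<le> \<sigma>" | "\<sigma> < t" by linarith
  then show ?thesis
  proof cases
    case 1
    have "1/M > 0" using M by simp
    then have "t - \<sigma> + 1/M \<le> 0" "t - \<sigma> \<le> 0" using 1 by linarith+
    then show ?thesis using 1 by (simp add: Lambda_def relu_def)
  next
    case 2
    then have "t - \<sigma> + 1/M \<ge> 0" "t - \<sigma> \<le> 0" by auto
    then show ?thesis using 2 M by (simp add: Lambda_def relu_def abs_if field_simps)
  next
    case 3
    then have "t - \<sigma> + 1/M \<ge> 0" "t - \<sigma> \<ge> 0" using M by auto
    moreover have "\<not> t \<le> \<sigma> - 1/M" using 3 M by (smt (verit) divide_pos_pos)
    ultimately show ?thesis using 3 M by (simp add: Lambda_def relu_def abs_if field_simps)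
  qed
qed

lemma realize_cons2: "ls \<noteq> [] \<Longrightarrow> realize (n0#n1#ns) (l#ls) x = realize (n1#ns) ls (\<lambda>i. relu (affine l n0 n1 x i))"
  by (cases ls) auto

definition Wsg :: "real \<Rightarrow> nat \<Rightarrow> nat \<Rightarrow> real" where
  "Wsg v k j = (if k = 0 \<and> j = 0 then v else 0)"

lemma affine_Wsg: "0 < B \<Longrightarrow> affine (Wsg v, \<lambda>_. 0) B n x = (\<lambda>i. if i = 0 \<and> 0 < n then v * x 0 else 0)"
  unfolding affine_def Wsg_def
  by (auto simp: if_distrib[of "\<lambda>z. z * _"] sum.delta cong: if_cong)

lemma relu_nonneg: "x \<ge> 0 \<Longrightarrow> relu x = x" by (simp add: relu_def)
lemma relu_scale: "a > 0 \<Longrightarrow> relu (a * x) = a * relu x" by (simp add: relu_def max_def mult_le_0_iff zero_le_mult_iff)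

lemma mid:
  assumes "0 < B" "x 0 \<ge> 0" "c \<ge> 0"
  shows "realize (B # replicate n B @ [1]) (replicate n (Wsg c, \<lambda>_. 0) @ [(Wsg v, \<lambda>_. 0)]) x
    = (\<lambda>k. if k = 0 then v * c^n * x 0 else 0)"
  using assms(2)
proof (induction n arbitrary: x)
  case 0
  then show ?case using assms by (auto simp: affine_Wsg)
next
  case (Suc n)
  have "realize (B # replicate (Suc n) B @ [1]) (replicate (Suc n) (Wsg c, \<lambda>_. 0) @ [(Wsg v, \<lambda>_. 0)]) x
    = realize (B # replicate n B @ [1]) (replicate n (Wsg c, \<lambda>_. 0) @ [(Wsg v, \<lambda>_. 0)])
        (\<lambda>i. relu (affine (Wsg c, \<lambda>_. 0) B B x i))"
    by (simp add: realize_cons2)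
  also have "\<dots> = (\<lambda>k. if k = 0 then v * c^n * (c * x 0) else 0)"
    by (subst Suc.IH) (use assms Suc.prems in \<open>auto simp: affine_Wsg relu_def\<close>)
  finally show ?case by (simp add: fun_eq_iff mult_ac)
qed


definition W1 :: "nat \<Rightarrow> real \<Rightarrow> nat \<Rightarrow> nat \<Rightarrow> real" where
  "W1 s a k j = (if k < 2*s \<and> j = k mod s then a else 0)"

definition b1 :: "nat \<Rightarrow> real \<Rightarrow> real \<Rightarrow> real \<Rightarrow> (nat \<Rightarrow> real) \<Rightarrow> nat \<Rightarrow> real" where
  "b1 s a b0 M y k = (if k < s then a*(1/M - y k) else if k < 2*s then -(a*y(k-s))
     else if k = 2*s then b0 else 0)"

definition W2 :: "nat \<Rightarrow> real \<Rightarrow> real \<Rightarrow> nat \<Rightarrow> nat \<Rightarrow> real" where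
  "W2 s \<beta> w k j = (if k = 0 then (if j<s then \<beta> else if j<2*s then -2*\<beta>
     else if j = 2*s then -w else 0) else 0)"

lemma W1_sum: assumes "s \<le> d"
  shows "(\<Sum>i<d. W1 s a k i * x i) = (if k < 2*s then a * x (k mod s) else 0)"
proof (cases "k < 2*s")
  case True
  then have "k mod s < d" using assms by (metis mod_less_divisor gr0I less_le_trans mult_0_right not_less0)
  then show ?thesis using True unfolding W1_def
    by (simp add: if_distrib[of "\<lambda>z. z * _"] sum.delta cong: if_cong)
qed (simp add: W1_def)

lemma layer1_out:
  assumes "s \<le> d" "a > 0" "b0 \<ge> 0" "j < B"
  shows "relu (affine (W1 s a, b1 s a b0 M y) d B x j) =
    (if j<s then a*relu(x j - y j + 1/M) else if j<2*s then a*relu(x (j-s) - y (j-s))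
     else if j=2*s then b0 else 0)"
proof -
  have e: "affine (W1 s a, b1 s a b0 M y) d B x j = (if j < 2*s then a * x (j mod s) else 0) + b1 s a b0 M y j"
    using assms by (simp add: affine_def W1_sum)
  show ?thesis
  proof (cases "j < s")
    case True
    then have "affine (W1 s a, b1 s a b0 M y) d B x j = a * (x j - y j + 1/M)"
      unfolding e b1_def by (simp add: algebra_simps)
    then show ?thesis using True assms by (simp add: relu_scale)
  next
    case F: False
    show ?thesis
    proof (cases "j < 2*s")
      case True
      then have "j mod s = j - s" using F by (simp add: le_mod_geq)
      then have "affine (W1 s a, b1 s a b0 M y) d B x j = a * (x (j-s) - y (j-s))"
        unfolding e b1_def using F True by (simp add: algebra_simps)
      then show ?thesis using True F assms by (simp add: relu_scale)
    next
      case False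
      then show ?thesis using F assms unfolding e b1_def by (simp add: relu_def)
    qed
  qed
qed


lemma sum_if_less: "m \<le> B \<Longrightarrow> (\<Sum>k<B. if k<m then C else 0) = real m * (C::real)"
proof -
  assume "m \<le> B"
  have "(\<Sum>k<B. if k<m then C else 0) = (\<Sum>k<B. if k \<in> {..<m} then C else 0)" by simp
  also have "\<dots> = sum (\<lambda>_. C) ({..<B} \<inter> {..<m})" by (simp only: sum.inter_restrict finite_lessThan)
  also have "{..<B} \<inter> {..<m} = {..<m}" using \<open>m \<le> B\<close> by auto
  finally show ?thesis by simp
qed

lemma W1_norm: assumes "s \<le> d" "2*s \<le> B"
  shows "(\<Sum>k<B. \<Sum>j<d. \<bar>W1 s a k j\<bar> powr q) = real (2*s) * \<bar>a\<bar> powr q"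
proof -
  have "(\<Sum>j<d. \<bar>W1 s a k j\<bar> powr q) = (if k < 2*s then \<bar>a\<bar> powr q else 0)" for k
  proof (cases "k < 2*s")
    case True
    then have "k mod s < d" using assms by (metis mod_less_divisor gr0I less_le_trans mult_0_right not_less0)
    have "(\<Sum>j<d. \<bar>W1 s a k j\<bar> powr q) = (\<Sum>j<d. if j = k mod s then \<bar>a\<bar> powr q else 0)"
      by (rule sum.cong) (auto simp: W1_def True)
    then show ?thesis using True \<open>k mod s < d\<close> by (simp add: sum.delta)
  qed (simp add: W1_def)
  then have "(\<Sum>k<B. \<Sum>j<d. \<bar>W1 s a k j\<bar> powr q) = (\<Sum>k<B. if k < 2*s then \<bar>a\<bar> powr q else 0)"
    by simp
  also have "\<dots> = real (2*s) * \<bar>a\<bar> powr q" using sum_if_less[of "2*s" B] assms by simp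
  finally show ?thesis .
qed

lemma b1_bound:
  assumes "2*s < B" "a > 0" "b0 \<ge> 0" "M \<ge> 1" "\<forall>i<s. 0 \<le> y i \<and> y i \<le> 1" "q \<ge> 0"
  shows "(\<Sum>k<B. \<bar>b1 s a b0 M y k\<bar> powr q) \<le> real (2*s) * a powr q + b0 powr q"
proof -
  have "(\<Sum>k<B. \<bar>b1 s a b0 M y k\<bar> powr q) \<le> (\<Sum>k<B. if k<s then a powr q else if k<2*s then (\<lambda>_. a powr q) (k-s)
     else if k=2*s then b0 powr q else 0)"
  proof (rule sum_mono)
    fix k assume "k \<in> {..<B}"
    have i1: "0 < 1/M" "1/M \<le> 1" using assms by auto
    show "\<bar>b1 s a b0 M y k\<bar> powr q \<le> (if k<s then a powr q else if k<2*s then (\<lambda>_. a powr q) (k-s)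
     else if k=2*s then b0 powr q else 0)"
    proof (cases "k < s")
      case True
      from assms(5) True have "0 \<le> y k" "y k \<le> 1" by auto
      then have "\<bar>1/M - y k\<bar> \<le> 1" using i1 unfolding abs_le_iff by linarith
      then have "\<bar>b1 s a b0 M y k\<bar> \<le> a" using True assms(2) by (simp add: b1_def abs_mult)
      then show ?thesis using True assms by (simp add: powr_mono2)
    next
      case F: False
      show ?thesis
      proof (cases "k < 2*s")
        case True
        then have "\<bar>y (k-s)\<bar> \<le> 1" using assms(5) F by auto
        then have "\<bar>b1 s a b0 M y k\<bar> \<le> a" using True F assms(2) by (simp add: b1_def abs_mult)
        then show ?thesis using True F assms by (simp add: powr_mono2)
      qed (use F assms in \<open>auto simp: b1_def\<close>)
    qed
  qed
  also have "\<dots> = (\<Sum>i<s. a powr q) + (\<Sum>i<s. a powr q) + b0 powr q"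
    by (rule sum_3parts[OF assms(1)])
  finally show ?thesis by simp
qed

lemma W2_norm: assumes "2*s < B" "\<beta> \<ge> 0" "w \<ge> 0"
  shows "(\<Sum>k<B. \<Sum>j<B. \<bar>W2 s \<beta> w k j\<bar> powr q) = real s * \<beta> powr q + real s * (2*\<beta>) powr q + w powr q"
proof -
  have "(\<Sum>k<B. \<Sum>j<B. \<bar>W2 s \<beta> w k j\<bar> powr q) = (\<Sum>k<B. if k = 0 then (\<Sum>j<B. \<bar>W2 s \<beta> w 0 j\<bar> powr q) else 0)"
    by (rule sum.cong) (auto simp: W2_def)
  also have "\<dots> = (\<Sum>j<B. \<bar>W2 s \<beta> w 0 j\<bar> powr q)" using assms by (simp add: sum.delta)
  also have "\<dots> = (\<Sum>j<B. if j<s then \<beta> powr q else if j<2*s then (\<lambda>_. (2*\<beta>) powr q) (j-s)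
     else if j=2*s then w powr q else 0)"
    by (rule sum.cong) (use assms in \<open>auto simp: W2_def\<close>)
  also have "\<dots> = (\<Sum>i<s. \<beta> powr q) + (\<Sum>i<s. (2*\<beta>) powr q) + w powr q"
    by (rule sum_3parts[OF assms(1)])
  finally show ?thesis by simp
qed

lemma Wsg_norm: assumes "0 < B" "0 < m" "q > 0"
  shows "mat_lq q m B (Wsg v) = \<bar>v\<bar>"
proof -
  have inner: "(\<Sum>j<B. \<bar>Wsg v k j\<bar> powr q) = (if k = 0 then \<bar>v\<bar> powr q else 0)" for k
  proof -
    have "(\<Sum>j<B. \<bar>Wsg v k j\<bar> powr q) = (\<Sum>j<B. if j = 0 then (if k=0 then \<bar>v\<bar> powr q else 0) else 0)"
      by (rule sum.cong) (auto simp: Wsg_def)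
    then show ?thesis using assms by (simp add: sum.delta)
  qed
  have "(\<Sum>k<m. \<Sum>j<B. \<bar>Wsg v k j\<bar> powr q) = \<bar>v\<bar> powr q"
    using assms by (simp add: inner sum.delta)
  then show ?thesis using assms by (simp add: mat_lq_def powr_powr)
qed

lemma vec0: "vec_lq q m (\<lambda>_. 0) = 0" by (simp add: vec_lq_def)

lemma root_le: fixes S c q :: real assumes "0 \<le> S" "S \<le> c powr q" "c > 0" "q > 0"
  shows "S powr (1/q) \<le> c"
proof -
  have "S powr (1/q) \<le> (c powr q) powr (1/q)" using assms by (intro powr_mono2) auto
  also have "\<dots> = c" using assms by (simp add: powr_powr)
  finally show ?thesis .
qed


theorem lemma2p5:
  fixes d L B s :: nat and c q :: real
  assumes "L \<ge> 3" and "B \<ge> 3" and "c > 0" and "1 \<le> q" and "q \<le> 2"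
    and "1 \<le> s" and "s \<le> d" and "real s \<le> real B / 3"
  shows "\<forall>(M::nat) (\<nu>::real) (y::nat \<Rightarrow> real).
     M \<ge> 1 \<longrightarrow> \<nu> \<in> {-1, 1} \<longrightarrow> (\<forall>i<d. 0 \<le> y i \<and> y i \<le> 1) \<longrightarrow>
     (\<lambda>x. \<lambda>k. if k = 0 then
         \<nu> * ((c ^ L * real s powr (1 - 2 / q) / (2 * 3 powr (2 / q))) / (real M * real s))
           * theta s (real M) y x
        else 0)
     \<in> H_class q (d # replicate (L - 1) B @ [1]) c"
proof (intro allI impI)
  fix M :: nat and \<nu> :: real and y :: "nat \<Rightarrow> real"
  assume M1: "M \<ge> 1" and nu: "\<nu> \<in> {-1,1}" and y: "\<forall>i<d. 0 \<le> y i \<and> y i \<le> 1"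
  have q0: "q > 0" using assms by simp
  have s0: "s > 0" using assms by simp
  have B3: "3*s \<le> B" using assms(8) by simp
  then have B2: "2*s < B" using s0 by simp
  have Bpos: "0 < B" using B2 by simp
  have ys: "\<forall>i<s. 0 \<le> y i \<and> y i \<le> 1" using y assms(7) by auto
  have Mpos: "real M > 0" "real M \<ge> 1" using M1 by auto
  define \<kappa> where "\<kappa> = (3 * real s) powr (1/q)"
  define a where "a = c/\<kappa>"
  define \<beta> where "\<beta> = c/(2*\<kappa>)"
  define b0 where "b0 = c/3"
  define w where "w = \<beta>*a*(real s - 1)/(real M * b0)"
  define l1 where "l1 = (W1 s a, b1 s a b0 (real M) y)"
  define l2 where "l2 = (W2 s \<beta> w, (\<lambda>_::nat. 0::real))"
  define lmid where "lmid = (Wsg c, (\<lambda>_::nat. 0::real))"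
  define lout where "lout = (Wsg (\<nu>*c), (\<lambda>_::nat. 0::real))"
  define \<Phi> where "\<Phi> = l1 # l2 # replicate (L-3) lmid @ [lout]"
  define arch where "arch = d # replicate (L - 1) B @ [1]"
  have "L - 1 = Suc (Suc (L-3))" using assms by simp
  then have arch': "arch = d # B # B # replicate (L-3) B @ [1]" unfolding arch_def by simp
  have \<kappa>pos: "\<kappa> > 0" unfolding \<kappa>_def using s0 by simp
  have \<kappa>q: "\<kappa> powr q = 3 * real s" unfolding \<kappa>_def using q0 s0 by (simp add: powr_powr)
  have \<kappa>2: "\<kappa>^2 = (3 * real s) powr (2/q)"
    unfolding \<kappa>_def using s0 by (simp add: powr_powr flip: powr_realpow)
  have "(3 * real s) powr 1 \<le> (3 * real s) powr (2/q)"
    by (rule powr_mono) (use assms s0 in \<open>auto simp: field_simps\<close>)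
  then have \<kappa>2ge: "\<kappa>^2 \<ge> 3 * real s" using \<kappa>2 s0 by simp
  have apos: "a > 0" and \<beta>pos: "\<beta> > 0" and b0pos: "b0 > 0"
    using \<kappa>pos assms by (auto simp: a_def \<beta>_def b0_def)
  have \<beta>a: "\<beta> * a = c^2 / (2*\<kappa>^2)" unfolding a_def \<beta>_def by (simp add: power2_eq_square)
  have w_eq: "w = 3*c*(real s - 1)/(2*\<kappa>^2*real M)"
    unfolding w_def \<beta>a b0_def using assms \<kappa>pos Mpos by (simp add: field_simps power2_eq_square)
  have w0: "w \<ge> 0" unfolding w_eq using assms \<kappa>pos Mpos by simp
  have "3*(real s - 1) \<le> \<kappa>^2 * real M"
  proof -
    have "\<kappa>^2 \<le> \<kappa>^2 * real M" using Mpos \<kappa>pos by simp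
    then show ?thesis using \<kappa>2ge by (simp add: algebra_simps)
  qed
  then have "c*(3*(real s - 1)) \<le> c*(\<kappa>^2*real M)"
    by (rule mult_left_mono) (use assms in simp)
  then have h: "3*c*(real s - 1) \<le> c*(\<kappa>^2*real M)" by (simp add: mult_ac)
  have "w \<le> c*(\<kappa>^2*real M)/(2*\<kappa>^2*real M)" unfolding w_eq
    by (rule divide_right_mono[OF h]) (use \<kappa>pos Mpos in simp)
  also have "\<dots> = c/2" using \<kappa>pos Mpos by (simp add: field_simps)
  finally have w_le: "w \<le> c/2" .
  define K where "K = (c ^ L * real s powr (1 - 2 / q) / (2 * 3 powr (2 / q))) / (real M * real s)"
  have K_eq: "K = c * c^(L-3) * (\<beta> * a / real M)"
  proof -
    have cL: "c^L = c * c^(L-3) * c^2" using assms(1)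
      by (metis add.commute le_add_diff_inverse numeral_3_eq_3 power_add power_Suc mult.commute numeral_2_eq_2 Suc_eq_plus1 mult.assoc power2_eq_square)
    have k2: "\<kappa>^2 = 3 powr (2/q) * real s powr (2/q)" unfolding \<kappa>2 by (simp add: powr_mult)
    have sp: "real s powr (1 - 2/q) = real s / real s powr (2/q)" using s0 by (simp add: powr_diff)
    show ?thesis unfolding K_def \<beta>a cL k2 sp using s0 Mpos assms by (simp add: field_simps)
  qed
  have real_eq: "realize arch \<Phi> x = (\<lambda>k. if k = 0 then \<nu> * K * theta s (real M) y x else 0)" for x
  proof -
    define h where "h = (\<lambda>i. relu (affine l1 d B x i))"
    define z where "z = (\<lambda>i. relu (affine l2 B B h i))"
    have hj: "h j = (if j<s then a*relu(x j - y j + 1/real M) else if j<2*s then a*relu(x (j-s) - y (j-s))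
     else if j=2*s then b0 else 0)" if "j < B" for j
      unfolding h_def l1_def using layer1_out[OF assms(7) apos b0pos[THEN less_imp_le] that] by simp
    have "(\<Sum>j<B. W2 s \<beta> w 0 j * h j) = (\<Sum>j<B. if j<s then \<beta>*(a*relu(x j - y j + 1/real M))
        else if j<2*s then (\<lambda>i. -2*\<beta>*(a*relu(x i - y i))) (j-s) else if j=2*s then -w*b0 else 0)"
      by (rule sum.cong) (auto simp: hj W2_def)
    also have "\<dots> = (\<Sum>i<s. \<beta>*(a*relu(x i - y i + 1/real M))) + (\<Sum>i<s. -2*\<beta>*(a*relu(x i - y i))) + -w*b0"
      by (rule sum_3parts[OF B2])
    finally have hsum: "(\<Sum>j<B. W2 s \<beta> w 0 j * h j) = \<beta>*a*(\<Sum>i<s. relu(x i - y i + 1/real M))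
       - 2*\<beta>*a*(\<Sum>i<s. relu(x i - y i)) - w*b0"
      by (simp add: sum_distrib_left sum_negf mult_ac)
    have lsum: "(\<Sum>i<s. Lambda (real M) (y i) (x i)) = real M * (\<Sum>i<s. relu(x i - y i + 1/real M))
       - 2*real M*(\<Sum>i<s. relu(x i - y i))"
      using Mpos by (simp add: Lambda_relu sum_subtractf sum_distrib_left)
    have wb0: "w*b0 = \<beta>*a*(real s - 1)/real M" unfolding w_def using b0pos Mpos by simp
    have "(\<Sum>j<B. W2 s \<beta> w 0 j * h j) = (\<beta>*a/real M) * ((\<Sum>i<s. Lambda (real M) (y i) (x i)) - (real s - 1))"
      unfolding hsum lsum wb0 using Mpos by (simp add: field_simps)
    note e = this
    have "z 0 = relu (\<Sum>j<B. W2 s \<beta> w 0 j * h j)" unfolding z_def l2_def affine_def using Bpos by simp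
    also have "\<dots> = relu ((\<beta>*a/real M) * ((\<Sum>i<s. Lambda (real M) (y i) (x i)) - (real s - 1)))"
      by (simp only: e)
    also have "\<dots> = (\<beta>*a/real M) * relu ((\<Sum>i<s. Lambda (real M) (y i) (x i)) - (real s - 1))"
      by (rule relu_scale) (use apos \<beta>pos Mpos in simp)
    finally have z0: "z 0 = (\<beta>*a/real M) * theta s (real M) y x" unfolding theta_def .
    have z0pos: "z 0 \<ge> 0" unfolding z_def by (simp add: relu_def)
    have "realize arch \<Phi> x = realize (B # B # replicate (L-3) B @ [1]) (l2 # replicate (L-3) lmid @ [lout]) h"
      unfolding arch' \<Phi>_def h_def by simp
    also have "\<dots> = realize (B # replicate (L-3) B @ [1]) (replicate (L-3) lmid @ [lout]) z"
      unfolding z_def by (simp add: realize_cons2)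
    also have "\<dots> = (\<lambda>k. if k = 0 then (\<nu>*c) * c^(L-3) * z 0 else 0)"
      unfolding lmid_def lout_def by (rule mid) (use Bpos z0pos assms in auto)
    finally show ?thesis unfolding z0 K_eq by (simp add: fun_eq_iff)
  qed
  have lenP: "length \<Phi> = L" unfolding \<Phi>_def using assms by simp
  have archnth: "arch ! i = (if i = 0 then d else if i < L then B else 1)" if "i \<le> L" for i
    using that assms unfolding arch' by (auto simp: nth_Cons' nth_append)
  have Pnth: "\<Phi> ! i = (if i = 0 then l1 else if i = 1 then l2 else if i < L-1 then lmid else lout)"
    if "i < L" for i
    using that assms unfolding \<Phi>_def by (auto simp: nth_Cons' nth_append)
  have Q: "c powr q > 0" using assms by simp
  have aq: "a powr q = c powr q / (3 * real s)" unfolding a_def using \<kappa>pos assms \<kappa>q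
    by (simp add: powr_divide)
  have "(2::real) powr 1 \<le> 2 powr q" "(3::real) powr 1 \<le> 3 powr q"
    by (rule powr_mono, use assms in simp, simp)+
  then have p2: "2 \<le> 2 powr q" and p3: "3 \<le> 3 powr q" by auto
  have \<beta>q: "\<beta> powr q = c powr q / 2 powr q / (3 * real s)" unfolding \<beta>_def using \<kappa>pos assms \<kappa>q
    by (simp add: powr_divide powr_mult)
  have b0q: "b0 powr q = c powr q / 3 powr q" unfolding b0_def using assms by (simp add: powr_divide)
  have wq: "w powr q \<le> c powr q / 2 powr q"
  proof -
    have "w powr q \<le> (c/2) powr q" using w0 w_le q0 by (intro powr_mono2) auto
    then show ?thesis using assms by (simp add: powr_divide)
  qed
  have cq_div1: "c powr q / 2 powr q \<le> c powr q / 2"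
    by (rule divide_left_mono) (use p2 Q in auto)
  have cq_div2: "c powr q / 3 powr q \<le> c powr q / 3"
    by (rule divide_left_mono) (use p3 Q in auto)
  note cq_div = cq_div1 cq_div2
  have e1: "real (2*s) * \<bar>a\<bar> powr q = (2/3) * c powr q" using apos aq s0 by (simp add: field_simps)
  have n1: "mat_lq q B d (W1 s a) \<le> c"
    unfolding mat_lq_def W1_norm[OF assms(7) B2[THEN less_imp_le]]
  proof (rule root_le)
    show "real (2*s) * \<bar>a\<bar> powr q \<le> c powr q" using e1 Q by linarith
  qed (use assms in auto)
  have n2: "vec_lq q B (b1 s a b0 (real M) y) \<le> c"
    unfolding vec_lq_def
  proof (rule root_le)
    have "(\<Sum>k<B. \<bar>b1 s a b0 (real M) y k\<bar> powr q) \<le> real (2*s) * a powr q + b0 powr q"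
      by (rule b1_bound) (use B2 apos b0pos Mpos ys q0 in auto)
    also have "\<dots> \<le> c powr q" unfolding aq b0q using cq_div s0 by (simp add: field_simps)
    finally show "(\<Sum>k<B. \<bar>b1 s a b0 (real M) y k\<bar> powr q) \<le> c powr q" .
  qed (use assms in \<open>auto intro: sum_nonneg\<close>)
  have n3: "mat_lq q B B (W2 s \<beta> w) \<le> c"
    unfolding mat_lq_def W2_norm[OF B2 \<beta>pos[THEN less_imp_le] w0]
  proof (rule root_le)
    have "2*\<beta> = a" unfolding a_def \<beta>_def using \<kappa>pos by simp
    then have "real s * \<beta> powr q + real s * (2*\<beta>) powr q + w powr q
        \<le> real s * (c powr q / 2 powr q / (3 * real s)) + real s * (c powr q / (3 * real s)) + c powr q / 2 powr q"
      using wq \<beta>q aq by simp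
    also have "\<dots> = (c powr q / 2 powr q) * (4/3) + c powr q / 3" using s0 by (simp add: field_simps)
    also have "\<dots> \<le> (c powr q / 2) * (4/3) + c powr q / 3" using cq_div by simp
    also have "\<dots> = c powr q" by simp
    finally show "real s * \<beta> powr q + real s * (2*\<beta>) powr q + w powr q \<le> c powr q" .
  qed (use assms w0 \<beta>pos in auto)
  have n4: "mat_lq q B B (Wsg c) \<le> c" "mat_lq q 1 B (Wsg (\<nu>*c)) \<le> c"
    using Wsg_norm[OF Bpos _ q0] Bpos nu assms by (auto simp: abs_mult)
  have "0 \<in> {..<L}" using assms(1) by simp
  then have ne: "{..<L} \<noteq> {}" by blast
  have net: "net_lq q arch \<Phi> \<le> c"
    unfolding net_lq_def lenP
  proof (subst Max_le_iff, simp, use ne in simp, safe)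
    fix i assume i: "i < L"
    show "max (mat_lq q (arch ! (i + 1)) (arch ! i) (fst (\<Phi> ! i))) (vec_lq q (arch ! (i + 1)) (snd (\<Phi> ! i))) \<le> c"
    proof -
      have a1: "arch ! (i+1) = (if i+1 < L then B else 1)" using archnth[of "i+1"] i by simp
      have a0: "arch ! i = (if i = 0 then d else B)" using archnth[of i] i by simp
      show ?thesis
        using i assms n1 n2 n3 n4 unfolding a1 a0 Pnth[OF i]
        by (auto simp: l1_def l2_def lmid_def lout_def vec0)
    qed
  qed
  have "(\<lambda>x. \<lambda>k. if k = 0 then
         \<nu> * ((c ^ L * real s powr (1 - 2 / q) / (2 * 3 powr (2 / q))) / (real M * real s))
           * theta s (real M) y x else 0) = realize arch \<Phi>"
    using real_eq unfolding K_def by (simp add: fun_eq_iff)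
  moreover have "length arch = length \<Phi> + 1" unfolding lenP arch_def using assms by simp
  ultimately show "(\<lambda>x. \<lambda>k. if k = 0 then
         \<nu> * ((c ^ L * real s powr (1 - 2 / q) / (2 * 3 powr (2 / q))) / (real M * real s))
           * theta s (real M) y x else 0) \<in> H_class q (d # replicate (L - 1) B @ [1]) c"
    unfolding H_class_def arch_def[symmetric] using net lenP assms by auto
qed

end
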